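(* Let $\Theta \subseteq \mathbb{R}^k$ and let $\{p_\theta\}_{\theta\in\Theta}$ be a family of probability densities (with respect to Lebesgue measure) on $\mathcal{X}\subseteq\mathbb{R}^d$. For each $\theta\in\Theta$ let $\ell_\theta:\mathcal{X}^2\to\mathbb{R}$ be a measurable function, and define the density of $(X,Y,Z)$ on $\mathcal{X}^2\times\{-1,0,1\}$ by $$q_\theta(x,y,z) = p_\theta(x)\,p_\theta(y)\,\mathbf{1}\{z=\operatorname{sign}(\ell_\theta(x,y))\}.$$ For $\theta^\star,\theta\in\Theta$ let $\mathcal{G}_0(\theta)=\{(x,y)\in\mathcal{X}^2 : |\ell_\theta(x,y)|>0\}$, $\mathcal{D}(\theta^\star,\theta)=\{(x,y)\in\mathcal{X}^2 : \ell_{\theta^\star}(x,y)\,\ell_\theta(x,y)<0\}$, and $$\widetilde{\mathrm{BC}}(\theta^\star,\theta)=\int_{\mathcal{D}(\theta^\star,\theta)\,\cup\,\left(\mathcal{G}_0(\theta^\star)^{\complement}\,\triangle\,\mathcal{G}_0(\theta)^{\complement}\right)} \sqrt{p_{\theta^\star}(x)p_{\theta^\star}(y)p_\theta(x)p_\theta(y)}\,\mathrm{d}x\,\mathrm{d}y .$$ Then $$\mathrm{H}(q_{\theta^\star},q_\theta)=\mathrm{H}(p_{\theta^\star}^{\otimes 2},p_\theta^{\otimes 2})+\widetilde{\mathrm{BC}}(\theta^\star,\theta),$$ where $p_\theta^{\otimes 2}(x,y)=p_\theta(x)p_\theta(y)$.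
   Context: For two probability distributions $P,Q$ with densities $p,q$ with respect to a common measure, the Bhattacharyya coefficient is $\mathrm{BC}(P,Q)=\int\sqrt{pq}$ (for $q_\theta$ the integral is over $\mathcal{X}^2$ with Lebesgue measure and summed over $z\in\{-1,0,1\}$), and the (squared) Hellinger distance is $\mathrm{H}(P,Q)=1-\mathrm{BC}(P,Q)$. $\triangle$ denotes symmetric difference of sets, and $\operatorname{sign}:\mathbb{R}\to\{-1,0,1\}$ is the usual sign function. *)

theory Defs
  imports "HOL-Analysis.Analysis"
begin

definition qdens :: "('t \<Rightarrow> 'a \<Rightarrow> real) \<Rightarrow> ('t \<Rightarrow> 'a \<times> 'a \<Rightarrow> real) \<Rightarrow> 't \<Rightarrow> 'a \<times> 'a \<Rightarrow> real \<Rightarrow> real" where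
  "qdens p l t w z = p t (fst w) * p t (snd w) * (if z = sgn (l t w) then 1 else 0)"

definition BC_q :: "'a::euclidean_space set \<Rightarrow> ('t \<Rightarrow> 'a \<Rightarrow> real) \<Rightarrow> ('t \<Rightarrow> 'a \<times> 'a \<Rightarrow> real) \<Rightarrow> 't \<Rightarrow> 't \<Rightarrow> real" where
  "BC_q X p l t1 t2 = (\<Sum>z\<in>{-1, 0, 1::real}.
      (LINT w : X \<times> X | lborel. sqrt (qdens p l t1 w z * qdens p l t2 w z)))"

definition H_q :: "'a::euclidean_space set \<Rightarrow> ('t \<Rightarrow> 'a \<Rightarrow> real) \<Rightarrow> ('t \<Rightarrow> 'a \<times> 'a \<Rightarrow> real) \<Rightarrow> 't \<Rightarrow> 't \<Rightarrow> real" where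
  "H_q X p l t1 t2 = 1 - BC_q X p l t1 t2"

definition BC_p2 :: "'a::euclidean_space set \<Rightarrow> ('t \<Rightarrow> 'a \<Rightarrow> real) \<Rightarrow> 't \<Rightarrow> 't \<Rightarrow> real" where
  "BC_p2 X p t1 t2 = (LINT w : X \<times> X | lborel.
      sqrt ((p t1 (fst w) * p t1 (snd w)) * (p t2 (fst w) * p t2 (snd w))))"

definition H_p2 :: "'a::euclidean_space set \<Rightarrow> ('t \<Rightarrow> 'a \<Rightarrow> real) \<Rightarrow> 't \<Rightarrow> 't \<Rightarrow> real" where
  "H_p2 X p t1 t2 = 1 - BC_p2 X p t1 t2"

definition G0 :: "'a set \<Rightarrow> ('t \<Rightarrow> 'a \<times> 'a \<Rightarrow> real) \<Rightarrow> 't \<Rightarrow> ('a \<times> 'a) set" where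
  "G0 X l t = {w \<in> X \<times> X. \<bar>l t w\<bar> > 0}"

definition Dset :: "'a set \<Rightarrow> ('t \<Rightarrow> 'a \<times> 'a \<Rightarrow> real) \<Rightarrow> 't \<Rightarrow> 't \<Rightarrow> ('a \<times> 'a) set" where
  "Dset X l ts t = {w \<in> X \<times> X. l ts w * l t w < 0}"

definition symdiff :: "'b set \<Rightarrow> 'b set \<Rightarrow> 'b set" where
  "symdiff A B = (A - B) \<union> (B - A)"

definition BC_tilde :: "'a::euclidean_space set \<Rightarrow> ('t \<Rightarrow> 'a \<Rightarrow> real) \<Rightarrow> ('t \<Rightarrow> 'a \<times> 'a \<Rightarrow> real) \<Rightarrow> 't \<Rightarrow> 't \<Rightarrow> real" where
  "BC_tilde X p l ts t = (LINT w : Dset X l ts t \<union> symdiff ((X \<times> X) - G0 X l ts) ((X \<times> X) - G0 X l t) | lborel.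
      sqrt (p ts (fst w) * p ts (snd w) * p t (fst w) * p t (snd w)))"

end

theory Submission
  imports Defs
begin
lemma prod_integrable:
  fixes f g :: "'a::euclidean_space \<Rightarrow> real"
  assumes f: "integrable lborel f" and g: "integrable lborel g"
  shows "integrable (lborel::('a\<times>'a) measure) (\<lambda>w. f (fst w) * g (snd w))"
proof -
  have fm[measurable]: "f \<in> borel_measurable lborel" and gm[measurable]: "g \<in> borel_measurable lborel"
    using f g by auto
  have "(\<integral>\<^sup>+w. ennreal (norm (f (fst w) * g (snd w))) \<partial>(lborel \<Otimes>\<^sub>M lborel))
     = (\<integral>\<^sup>+x. \<integral>\<^sup>+y. ennreal (norm (f x)) * ennreal (norm (g y)) \<partial>lborel \<partial>lborel)"
    by (subst lborel.nn_integral_fst[symmetric]) (auto simp: abs_mult ennreal_mult)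
  also have "\<dots> = (\<integral>\<^sup>+x. ennreal (norm (f x)) * (\<integral>\<^sup>+y. ennreal (norm (g y)) \<partial>lborel) \<partial>lborel)"
    by (subst nn_integral_cmult) auto
  also have "\<dots> = (\<integral>\<^sup>+x. ennreal (norm (f x)) \<partial>lborel) * (\<integral>\<^sup>+y. ennreal (norm (g y)) \<partial>lborel)"
    by (subst nn_integral_multc) auto
  also have "\<dots> < \<infinity>"
    using f g unfolding integrable_iff_bounded by (simp add: ennreal_mult_less_top)
  finally have "integrable (lborel \<Otimes>\<^sub>M lborel) (\<lambda>w. f (fst w) * g (snd w))"
    unfolding integrable_iff_bounded by auto
  then show ?thesis by (simp add: lborel_prod)
qed

theorem mainTheorem1:
  fixes \<Theta> :: "(real ^ 'k) set"
    and X :: "(real ^ 'd) set"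
    and p :: "real ^ 'k \<Rightarrow> real ^ 'd \<Rightarrow> real"
    and l :: "real ^ 'k \<Rightarrow> (real ^ 'd) \<times> (real ^ 'd) \<Rightarrow> real"
    and \<theta>s \<theta> :: "real ^ 'k"
  assumes X_meas: "X \<in> sets lborel"
    and p_nonneg: "\<And>t x. t \<in> \<Theta> \<Longrightarrow> x \<in> X \<Longrightarrow> p t x \<ge> 0"
    and p_meas: "\<And>t. t \<in> \<Theta> \<Longrightarrow> set_borel_measurable lborel X (p t)"
    and p_int: "\<And>t. t \<in> \<Theta> \<Longrightarrow> set_integrable lborel X (p t)"
    and p_one: "\<And>t. t \<in> \<Theta> \<Longrightarrow> (LINT x : X | lborel. p t x) = 1"
    and l_meas: "\<And>t. t \<in> \<Theta> \<Longrightarrow> set_borel_measurable lborel (X \<times> X) (l t)"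
    and "\<theta>s \<in> \<Theta>" and "\<theta> \<in> \<Theta>"
  shows "H_q X p l \<theta>s \<theta> = H_p2 X p \<theta>s \<theta> + BC_tilde X p l \<theta>s \<theta>"
proof -
  note th = \<open>\<theta>s \<in> \<Theta>\<close> \<open>\<theta> \<in> \<Theta>\<close>
  define ps where "ps x = indicator X x * p \<theta>s x" for x
  define pt where "pt x = indicator X x * p \<theta> x" for x
  have ps_int: "integrable lborel ps" and pt_int: "integrable lborel pt"
    using p_int[OF th(1)] p_int[OF th(2)] unfolding set_integrable_def ps_def pt_def by auto
  have [measurable]: "ps \<in> borel_measurable lborel" "pt \<in> borel_measurable lborel"
    using ps_int pt_int by auto
  have ps0: "ps x \<ge> 0" and pt0: "pt x \<ge> 0" for x
    using p_nonneg th unfolding ps_def pt_def indicator_def by auto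
  define M where "M = (lborel \<Otimes>\<^sub>M lborel :: ((real^'d) \<times> (real^'d)) measure)"
  have LM: "lborel = M" unfolding M_def by (simp add: lborel_prod)
  define L where "L t w = indicator (X \<times> X) w * l t w" for t w
  have [measurable]: "L \<theta>s \<in> borel_measurable M" "L \<theta> \<in> borel_measurable M"
    using l_meas[OF th(1)] l_meas[OF th(2)] unfolding set_borel_measurable_def L_def LM
    by (auto simp: fun_eq_iff)
  have [measurable]: "X \<in> sets lborel" by (rule X_meas)
  define R where "R w = sqrt (ps (fst w) * ps (snd w) * pt (fst w) * pt (snd w))" for w
  have Rm[measurable]: "R \<in> borel_measurable M" unfolding R_def M_def by measurable
  have R0: "R w \<ge> 0" for w unfolding R_def using ps0 pt0 by simp
  have intS: "integrable M (\<lambda>w. ps (fst w) * ps (snd w) + pt (fst w) * pt (snd w))"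
    unfolding LM[symmetric]
    by (intro Bochner_Integration.integrable_add prod_integrable ps_int pt_int)
  have bndR: "norm (R w) \<le> norm (ps (fst w) * ps (snd w) + pt (fst w) * pt (snd w))" for w
  proof -
    have a: "ps (fst w) * ps (snd w) \<ge> 0" "pt (fst w) * pt (snd w) \<ge> 0" using ps0 pt0 by auto
    have "R w = sqrt ((ps (fst w) * ps (snd w)) * (pt (fst w) * pt (snd w)))"
      unfolding R_def by (simp add: mult.assoc)
    also have "\<dots> \<le> ps (fst w) * ps (snd w) + pt (fst w) * pt (snd w)"
    proof -
      define a1 where "a1 = ps (fst w) * ps (snd w)"
      define b1 where "b1 = pt (fst w) * pt (snd w)"
      have "a1 \<ge> 0" "b1 \<ge> 0" using a unfolding a1_def b1_def by auto
      then have "a1 * b1 \<le> (a1 + b1)^2"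
        by (simp add: power2_eq_square algebra_simps add_nonneg_nonneg)
      then have "sqrt (a1 * b1) \<le> sqrt ((a1 + b1)^2)" by (rule real_sqrt_le_mono)
      also have "\<dots> = a1 + b1" using \<open>a1 \<ge> 0\<close> \<open>b1 \<ge> 0\<close> by simp
      finally show ?thesis unfolding a1_def b1_def .
    qed
    finally show ?thesis using R0[of w] a by simp
  qed
  have intR: "integrable M R"
    using Bochner_Integration.integrable_bound[OF intS Rm] bndR by simp
  have XXM[measurable]: "X \<times> X \<in> sets M" unfolding M_def using X_meas by simp
  define Cf where "Cf z w = (if w \<in> X \<times> X \<and> z = sgn (L \<theta>s w) \<and> z = sgn (L \<theta> w) then R w else 0)" for z w
  define Bf where "Bf w = (if w \<in> X \<times> X \<and> sgn (L \<theta>s w) \<noteq> sgn (L \<theta> w) then R w else 0)" for w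
  define Af where "Af w = (if w \<in> X \<times> X then R w else 0)" for w
  have intC: "integrable M (Cf z)" for z
  proof (rule Bochner_Integration.integrable_bound[OF intR])
    show "Cf z \<in> borel_measurable M" unfolding Cf_def by measurable
  qed (auto simp: Cf_def R0)
  have intB: "integrable M Bf"
  proof (rule Bochner_Integration.integrable_bound[OF intR])
    show "Bf \<in> borel_measurable M" unfolding Bf_def by measurable
  qed (auto simp: Bf_def R0)
  have sgn3: "sgn (x::real) \<in> {-1,0,1}" for x by (auto simp: sgn_real_def)
  have Csum: "(\<Sum>z\<in>{-1,0,1::real}. Cf z w) = (if w \<in> X \<times> X \<and> sgn (L \<theta>s w) = sgn (L \<theta> w) then R w else 0)" for w
    using sgn3[of "L \<theta>s w"] unfolding Cf_def by auto
  have ABC: "Af w = Bf w + (\<Sum>z\<in>{-1,0,1::real}. Cf z w)" for w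
    unfolding Csum Af_def Bf_def by auto
  have q_eq: "BC_q X p l \<theta>s \<theta> = (\<Sum>z\<in>{-1,0,1::real}. integral\<^sup>L M (Cf z))"
    unfolding BC_q_def set_lebesgue_integral_def LM
  proof (intro sum.cong refl Bochner_Integration.integral_cong)
    fix z w show "indicator (X \<times> X) w *\<^sub>R sqrt (qdens p l \<theta>s w z * qdens p l \<theta> w z) = Cf z w"
      unfolding Cf_def qdens_def R_def ps_def pt_def L_def
      by (cases w) (auto simp: indicator_def mult_ac)
  qed
  also have "\<dots> = integral\<^sup>L M (\<lambda>w. \<Sum>z\<in>{-1,0,1::real}. Cf z w)"
    by (rule Bochner_Integration.integral_sum[symmetric]) (rule intC)
  finally have q_eq: "BC_q X p l \<theta>s \<theta> = integral\<^sup>L M (\<lambda>w. \<Sum>z\<in>{-1,0,1::real}. Cf z w)" .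
  have p2_eq: "BC_p2 X p \<theta>s \<theta> = integral\<^sup>L M Af"
    unfolding BC_p2_def set_lebesgue_integral_def LM
    by (intro Bochner_Integration.integral_cong refl)
       (auto simp: Af_def R_def ps_def pt_def indicator_def mult_ac)
  have t_eq: "BC_tilde X p l \<theta>s \<theta> = integral\<^sup>L M Bf"
    unfolding BC_tilde_def set_lebesgue_integral_def LM
  proof (intro Bochner_Integration.integral_cong refl)
    fix w :: "(real^'d) \<times> (real^'d)"
    show "indicator (Dset X l \<theta>s \<theta> \<union> symdiff (X \<times> X - G0 X l \<theta>s) (X \<times> X - G0 X l \<theta>)) w *\<^sub>R
          sqrt (p \<theta>s (fst w) * p \<theta>s (snd w) * p \<theta> (fst w) * p \<theta> (snd w)) = Bf w"
    proof (cases "w \<in> X \<times> X")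
      case True
      have "w \<in> Dset X l \<theta>s \<theta> \<union> symdiff (X \<times> X - G0 X l \<theta>s) (X \<times> X - G0 X l \<theta>)
            \<longleftrightarrow> sgn (l \<theta>s w) \<noteq> sgn (l \<theta> w)"
        using True unfolding Dset_def symdiff_def G0_def
        by (auto simp: sgn_real_def mult_less_0_iff split: if_splits)
      then show ?thesis using True
        unfolding Bf_def R_def ps_def pt_def L_def by (auto simp: indicator_def)
    next
      case False
      then have "w \<notin> Dset X l \<theta>s \<theta> \<union> symdiff (X \<times> X - G0 X l \<theta>s) (X \<times> X - G0 X l \<theta>)"
        unfolding Dset_def symdiff_def G0_def by auto
      then show ?thesis using False unfolding Bf_def by simp
    qed
  qed
  have "integral\<^sup>L M Af = integral\<^sup>L M Bf + integral\<^sup>L M (\<lambda>w. \<Sum>z\<in>{-1,0,1::real}. Cf z w)"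
    unfolding ABC by (intro Bochner_Integration.integral_add intB Bochner_Integration.integrable_sum intC)
  then show ?thesis
    unfolding H_q_def H_p2_def q_eq p2_eq t_eq by simp
qed
end
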